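(* Let $T$ be an SSYT of skew shape. (a) If $S$ is the result of a row insertion $T\leftarrow k$ (external, or internal from some row) for some positive integer $k$, then the reverse row insertion $S\rightarrow c$ results in $T$, where $c$ is the unique cell that is non-empty in $S$ but empty in $T$. (b) If $S$ is the result of $T\rightarrow c$ for some outside corner $c$ of $T$, and the final entry $k$ of $T\rightarrow c$ lands in row $r\ge0$, then $S\leftarrow_r k$ results in $T$.
   Context: Diagrams are in French notation (rows numbered from the bottom starting at 1; a partition $\lambda$ consists of the cells in column $i$, row $j$ with $1\le i\le\lambda_j$; $\lambda/\mu$ is the set difference). An SSYT of skew shape has positive integer entries weakly increasing left to right in rows and strictly increasing bottom to top in columns. An inside corner of $T$ is a cell with no cell of $T$ immediately below or left of it; an outside corner is a cell with no cell of $T$ immediately above or right of it. Row insertion: to insert $x$ starting at row $j$: if $x$ is weakly larger than all entries of row $j$ (or row $j$ is empty), put $x$ in a new cell at the right end of row $j$ (if the row is empty and the shape is $\alpha/\beta$, in column $\alpha_j+1$) and stop; otherwise replace the entry $y$ of the leftmost cell of row $j$ with entry $>x$ by $x$ and insert $y$ starting at row $j+1$. External insertion $T\leftarrow_0 k$ inserts $k$ starting at row 1. If $T$ has an inside corner in row $r\ge1$ with entry $k$, internal insertion $T\leftarrow_r k$ removes that cell and inserts $k$ starting at row $r+1$. Reverse row insertion $T\rightarrow c$, $c$ an outside corner in row $j$ with entry $k$: delete $c$ and reverse-insert $x=k$ into row $j-1$: if that row index is 0, stop ($x$ lands in row 0); else if $x$ is weakly smaller than all entries of that row $r$, place $x$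 in a new cell immediately left of the leftmost cell of row $r$ and stop ($x$ lands in row $r$); else replace the entry $y$ of the rightmost cell of row $r$ with entry $<x$ by $x$ and reverse-insert $y$ into row $r-1$. The value $x$ at termination is the final entry. *)

theory Defs
  imports Main
begin

text \<open>A skew tableau of shape alpha/beta (French notation). Row j (j \<ge> 1) is
  stored as the pair (beta_j, list of entries left to right); its cells are the
  columns beta_j+1 .. alpha_j where alpha_j = beta_j + length of the list.
  Row 0 is unused (kept as (0,[])).\<close>

type_synonym tab = "nat \<Rightarrow> nat \<times> nat list"

definition beta :: "tab \<Rightarrow> nat \<Rightarrow> nat" where
  "beta T j = fst (T j)"

definition alpha :: "tab \<Rightarrow> nat \<Rightarrow> nat" where
  "alpha T j = fst (T j) + length (snd (T j))"

definition cells :: "tab \<Rightarrow> (nat \<times> nat) set" where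
  "cells T = {(i, j). 1 \<le> j \<and> beta T j < i \<and> i \<le> alpha T j}"

definition entry :: "tab \<Rightarrow> nat \<times> nat \<Rightarrow> nat" where
  "entry T c = snd (T (snd c)) ! (fst c - beta T (snd c) - 1)"

definition skew_ssyt :: "tab \<Rightarrow> bool" where
  "skew_ssyt T \<longleftrightarrow>
     T 0 = (0, []) \<and>
     finite {j. T j \<noteq> (0, [])} \<and>
     (\<forall>j\<ge>1. beta T (Suc j) \<le> beta T j \<and> alpha T (Suc j) \<le> alpha T j) \<and>
     (\<forall>j. \<forall>y\<in>set (snd (T j)). 0 < y) \<and>
     (\<forall>j. sorted (snd (T j))) \<and>
     (\<forall>i j. (i, j) \<in> cells T \<and> (i, Suc j) \<in> cells T \<longrightarrow>
              entry T (i, j) < entry T (i, Suc j))"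

definition inside_corner :: "tab \<Rightarrow> nat \<times> nat \<Rightarrow> bool" where
  "inside_corner T c \<longleftrightarrow> c \<in> cells T \<and>
     (fst c, snd c - 1) \<notin> cells T \<and> (fst c - 1, snd c) \<notin> cells T"

definition outside_corner :: "tab \<Rightarrow> nat \<times> nat \<Rightarrow> bool" where
  "outside_corner T c \<longleftrightarrow> c \<in> cells T \<and>
     (fst c, Suc (snd c)) \<notin> cells T \<and> (Suc (fst c), snd c) \<notin> cells T"

inductive row_ins :: "tab \<Rightarrow> nat \<Rightarrow> nat \<Rightarrow> tab \<Rightarrow> bool" where
  place: "\<forall>y\<in>set (snd (T j)). y \<le> x \<Longrightarrow>
          row_ins T j x (T(j := (fst (T j), snd (T j) @ [x])))"
| bump: "\<not> (\<forall>y\<in>set (snd (T j)). y \<le> x) \<Longrightarrow>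
         p = (LEAST p. p < length (snd (T j)) \<and> x < snd (T j) ! p) \<Longrightarrow>
         row_ins (T(j := (fst (T j), (snd (T j))[p := x]))) (Suc j) (snd (T j) ! p) S \<Longrightarrow>
         row_ins T j x S"

text \<open>insert_tab T r k S: S is the result of T \<leftarrow>_r k
  (r = 0: external insertion; r \<ge> 1: internal insertion from row r).\<close>
definition insert_tab :: "tab \<Rightarrow> nat \<Rightarrow> nat \<Rightarrow> tab \<Rightarrow> bool" where
  "insert_tab T r k S \<longleftrightarrow>
     (if r = 0 then row_ins T 1 k S
      else (\<exists>i. inside_corner T (i, r) \<and> entry T (i, r) = k \<and>
                row_ins (T(r := (Suc (fst (T r)), tl (snd (T r))))) (Suc r) k S))"

text \<open>Reverse-insert x into row r; returns (tableau, landing row, final entry).\<close>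
fun rev_into :: "tab \<Rightarrow> nat \<Rightarrow> nat \<Rightarrow> tab \<times> nat \<times> nat" where
  "rev_into T 0 x = (T, 0, x)"
| "rev_into T (Suc r) x =
     (let es = snd (T (Suc r)) in
      if \<forall>y\<in>set es. x \<le> y
      then (T(Suc r := (fst (T (Suc r)) - 1, x # es)), Suc r, x)
      else (let p = (GREATEST p. p < length es \<and> es ! p < x)
            in rev_into (T(Suc r := (fst (T (Suc r)), es[p := x]))) r (es ! p)))"

definition rev_ins :: "tab \<Rightarrow> nat \<times> nat \<Rightarrow> tab \<times> nat \<times> nat" where
  "rev_ins T c =
     rev_into (T(snd c := (fst (T (snd c)), butlast (snd (T (snd c))))))
              (snd c - 1) (entry T c)"

end

theory Submission
  imports Defs
begin

lemma mem_cells: "(i, j) \<in> cells T \<longleftrightarrow> 1 \<le> j \<and> fst (T j) < i \<and> i \<le> fst (T j) + length (snd (T j))"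
  by (simp add: cells_def beta_def alpha_def)

lemma row_ins_det: "row_ins T j x S1 \<Longrightarrow> row_ins T j x S2 \<Longrightarrow> S1 = S2"
proof (induction arbitrary: S2 rule: row_ins.induct)
  case (place T j x)
  from place.prems show ?case by cases (use place.hyps in auto)
next
  case (bump T j x p S)
  from bump.prems show ?case
  proof cases
    case place thus ?thesis using bump.hyps(1) by simp
  next
    case (bump p')
    hence "p' = p" using \<open>p = _\<close> by simp
    thus ?thesis using bump.IH \<open>row_ins _ (Suc j) _ S2\<close> by blast
  qed
qed

lemma rowins_rev:
  assumes "row_ins T j x S" "1 \<le> j" "\<forall>i\<ge>j. sorted (snd (T i))" "\<forall>i\<ge>j. alpha T (Suc i) \<le> alpha T i"
  shows "\<exists>c. cells S - cells T = {c} \<and> outside_corner S c \<and> cells T \<subseteq> cells S \<and> j \<le> snd c \<and> rev_ins S c = rev_into T (j - 1) x"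
  using assms
proof (induction rule: row_ins.induct)
  case (place T j x)
  obtain b l where Tj: "T j = (b, l)" by fastforce
  define S where "S = T(j := (fst (T j), snd (T j) @ [x]))"
  have Sj: "S j = (b, l @ [x])" using Tj by (simp add: S_def)
  define c where "c = (b + length l + 1, j)"
  have cs: "cells S = cells T \<union> {c}"
    using Tj place.prems(1) by (auto simp: S_def c_def cells_def alpha_def beta_def split: if_splits)
  have cn: "c \<notin> cells T" using Tj by (simp add: c_def mem_cells)
  have al: "alpha T (Suc j) \<le> alpha T j" using place.prems by auto
  have oc: "outside_corner S c"
    using cs al Tj unfolding outside_corner_def
    by (auto simp: c_def mem_cells S_def alpha_def)
  have e: "entry S c = x" using Sj by (simp add: entry_def c_def beta_def)
  have "S(j := (fst (S j), butlast (snd (S j)))) = T"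
    using Sj Tj by (auto simp: S_def)
  hence "rev_ins S c = rev_into T (j - 1) x" using e by (simp add: rev_ins_def c_def)
  thus ?case using cs cn oc unfolding S_def[symmetric] by (auto intro!: exI[of _ c] simp: c_def)
next
  case (bump T j x p S)
  obtain b l where Tj: "T j = (b, l)" by fastforce
  define T' where "T' = T(j := (fst (T j), (snd (T j))[p := x]))"
  have "\<exists>c. cells S - cells T' = {c} \<and> outside_corner S c \<and> cells T' \<subseteq> cells S \<and> Suc j \<le> snd c \<and> rev_ins S c = rev_into T' (Suc j - 1) (snd (T j) ! p)"
  proof -
    have h2: "\<forall>i\<ge>Suc j. sorted (snd (T' i))" using bump.prems by (simp add: T'_def)
    have h3: "\<forall>i\<ge>Suc j. alpha T' (Suc i) \<le> alpha T' i" using bump.prems by (simp add: T'_def alpha_def)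
    show ?thesis using bump.IH[OF _ h2[unfolded T'_def] h3[unfolded T'_def]] unfolding T'_def by (simp add: fun_upd_def)
  qed
  then obtain c where c: "cells S - cells T' = {c}" "outside_corner S c" "cells T' \<subseteq> cells S" "Suc j \<le> snd c"
     "rev_ins S c = rev_into T' j (l ! p)" using Tj by auto
  have ceq: "cells T' = cells T" unfolding T'_def by (auto simp: cells_def alpha_def beta_def)
  have srt: "sorted l" using bump.prems Tj by (metis order_refl snd_conv)
  have ex: "\<exists>q. q < length l \<and> x < l ! q" using bump.hyps(1) Tj by (auto simp: in_set_conv_nth not_le)
  have pp: "p < length l \<and> x < l ! p" using LeastI_ex[OF ex] bump.hyps(2) Tj by simp
  obtain j0 where j0: "j = Suc j0" using bump.prems(1) by (cases j) auto
  let ?es = "l[p := x]"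
  have g: "(GREATEST q. q < length ?es \<and> ?es ! q < l ! p) = p"
  proof (rule Greatest_equality)
    show "p < length ?es \<and> ?es ! p < l ! p" using pp by simp
  next
    fix y assume "y < length ?es \<and> ?es ! y < l ! p"
    hence y: "y < length l" "?es ! y < l ! p" by auto
    show "y \<le> p"
    proof (rule ccontr)
      assume "\<not> y \<le> p"
      hence "p < y" by simp
      hence "?es ! y = l ! y" by simp
      moreover have "l ! p \<le> l ! y" using sorted_nth_mono[OF srt, of p y] \<open>p < y\<close> y by simp
      ultimately show False using y by simp
    qed
  qed
  have nall: "\<not> (\<forall>y\<in>set ?es. l ! p \<le> y)" 
  proof
    assume "\<forall>y\<in>set ?es. l ! p \<le> y"
    moreover have "x \<in> set ?es" using pp by (simp add: set_update_memI)
    ultimately show False using pp by auto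
  qed
  have "rev_into T' j (l ! p) = rev_into T j0 x"
    using g nall pp Tj j0 by (auto simp add: T'_def Let_def fun_upd_idem)
  thus ?case using c ceq j0 by auto
qed

lemma ssytD:
  assumes "skew_ssyt T"
  shows "T 0 = (0, [])" "\<And>j. 1 \<le> j \<Longrightarrow> fst (T (Suc j)) \<le> fst (T j)"
    "\<And>j. 1 \<le> j \<Longrightarrow> fst (T (Suc j)) + length (snd (T (Suc j))) \<le> fst (T j) + length (snd (T j))"
    "\<And>j. sorted (snd (T j))"
    "\<And>i j. (i, j) \<in> cells T \<Longrightarrow> (i, Suc j) \<in> cells T \<Longrightarrow> entry T (i, j) < entry T (i, Suc j)"
  using assms unfolding skew_ssyt_def beta_def alpha_def by auto

lemma entry_row: "U j = T j \<Longrightarrow> entry U (i, j) = entry T (i, j)"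
  by (simp add: entry_def beta_def)

lemma cells_row: "U j = T j \<Longrightarrow> (i, j) \<in> cells U \<longleftrightarrow> (i, j) \<in> cells T"
  by (simp add: mem_cells)

lemma rev_into_ins:
  assumes T: "skew_ssyt T"
  shows "rev_into U n x = (S, r, k) \<Longrightarrow> row_ins U (Suc n) x T \<Longrightarrow> (\<forall>i. 1 \<le> i \<and> i \<le> n \<longrightarrow> U i = T i)
    \<Longrightarrow> 1 \<le> q \<Longrightarrow> (1 \<le> n \<longrightarrow> q \<le> alpha U n) \<Longrightarrow> (1 \<le> n \<longrightarrow> (q, n) \<in> cells U \<longrightarrow> entry U (q, n) < x)
    \<Longrightarrow> insert_tab S r k T"
proof (induction U n x arbitrary: q rule: rev_into.induct)
  case (1 U x) then show ?case by (simp add: insert_tab_def)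
next
  case (2 U m x)
  obtain bb es where Um: "U (Suc m) = (bb, es)" by fastforce
  have Tm: "T (Suc m) = (bb, es)" using 2(4) Um by (metis le_add1 le_refl plus_1_eq_Suc)
  have srt: "sorted es" using ssytD(4)[OF T, of "Suc m"] Tm by simp
  show ?case
  proof (cases "\<forall>y\<in>set es. x \<le> y")
    case True
    hence res: "S = U(Suc m := (bb - 1, x # es))" "r = Suc m" "k = x" using 2(2) Um by auto
    have qnot: "(q, Suc m) \<notin> cells U"
    proof
      assume a: "(q, Suc m) \<in> cells U"
      hence "entry U (q, Suc m) < x" using 2(7) by simp
      moreover have "entry U (q, Suc m) \<in> set es" using a Um
        by (auto simp: entry_def beta_def mem_cells)
      ultimately show False using True by auto
    qed
    have "q \<le> alpha U (Suc m)" using 2(6) by simp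
    hence "q \<le> bb" using qnot Um by (auto simp: mem_cells alpha_def)
    hence bb1: "1 \<le> bb" using 2(5) by simp
    have Sm: "S (Suc m) = (bb - 1, x # es)" using res by simp
    have ic: "inside_corner S (bb, Suc m)"
      unfolding inside_corner_def
    proof (intro conjI)
      show "(bb, Suc m) \<in> cells S" using Sm bb1 by (simp add: mem_cells)
      show "(fst (bb, Suc m), snd (bb, Suc m) - 1) \<notin> cells S"
      proof (cases m)
        case 0 then show ?thesis by (simp add: mem_cells)
      next
        case (Suc m')
        have "S m = T m" using res 2(4) Suc by auto
        moreover have "fst (T (Suc m)) \<le> fst (T m)" using ssytD(2)[OF T, of m] Suc by simp
        ultimately show ?thesis using Tm by (simp add: mem_cells)
      qed
      show "(fst (bb, Suc m) - 1, snd (bb, Suc m)) \<notin> cells S" using Sm by (simp add: mem_cells)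
    qed
    have ent: "entry S (bb, Suc m) = x" using Sm bb1 by (simp add: entry_def beta_def)
    have "S(Suc m := (Suc (fst (S (Suc m))), tl (snd (S (Suc m))))) = U" using bb1 Um Sm res
      by (auto simp: fun_upd_idem)
    hence ri: "row_ins (S(r := (Suc (fst (S r)), tl (snd (S r))))) (Suc r) k T" using 2(3) res(2,3) by simp
    have "r \<noteq> 0" using res by simp
    hence "insert_tab S r k T \<longleftrightarrow> (\<exists>i. inside_corner S (i, r) \<and> entry S (i, r) = k \<and>
                row_ins (S(r := (Suc (fst (S r)), tl (snd (S r))))) (Suc r) k T)"
      unfolding insert_tab_def by (simp only: if_False)
    thus ?thesis using ic ent ri res(2,3) by blast
  next
    case False
    define p where "p = (GREATEST p. p < length es \<and> es ! p < x)"
    define U' where "U' = U(Suc m := (bb, es[p := x]))"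
    obtain q0 where q0: "q0 < length es" "es ! q0 < x" using False by (auto simp: in_set_conv_nth not_le)
    have bnd: "\<And>y. y < length es \<and> es ! y < x \<Longrightarrow> y \<le> length es" by auto
    have pp: "p < length es \<and> es ! p < x" unfolding p_def
      by (rule GreatestI_nat[OF _ bnd]) (use q0 in auto)
    have pmax: "\<And>y. y < length es \<Longrightarrow> es ! y < x \<Longrightarrow> y \<le> p" unfolding p_def
      by (rule Greatest_le_nat[OF _ bnd]) auto
    have rec: "rev_into U' m (es ! p) = (S, r, k)" using 2(2) Um False
      by (simp add: Let_def p_def U'_def)
    have e1: "es = snd (U (Suc m))" using Um by simp
    have e2: "fst (U (Suc m)) = bb" using Um by simp
    note IH = 2(1)[OF e1 False p_def, unfolded e2, folded U'_def]
    have U'm: "U' (Suc m) = (bb, es[p := x])" by (simp add: U'_def)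
    have ri: "row_ins U' (Suc m) (es ! p) T"
    proof (rule row_ins.bump)
      show "\<not> (\<forall>y\<in>set (snd (U' (Suc m))). y \<le> es ! p)"
      proof
        assume "\<forall>y\<in>set (snd (U' (Suc m))). y \<le> es ! p"
        moreover have "x \<in> set (snd (U' (Suc m)))" using pp U'm by (simp add: set_update_memI)
        ultimately show False using pp by auto
      qed
      show "p = (LEAST p'. p' < length (snd (U' (Suc m))) \<and> es ! p < snd (U' (Suc m)) ! p')"
      proof (rule sym, rule Least_equality)
        show "p < length (snd (U' (Suc m))) \<and> es ! p < snd (U' (Suc m)) ! p" using pp U'm by simp
      next
        fix y assume y: "y < length (snd (U' (Suc m))) \<and> es ! p < snd (U' (Suc m)) ! y"
        show "p \<le> y"
        proof (rule ccontr)
          assume "\<not> p \<le> y"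
          hence "y < p" by simp
          hence "snd (U' (Suc m)) ! y = es ! y" using U'm by simp
          moreover have "es ! y \<le> es ! p" using sorted_nth_mono[OF srt, of y p] \<open>y < p\<close> pp by simp
          ultimately show False using y by simp
        qed
      qed
      have "U'(Suc m := (fst (U' (Suc m)), (snd (U' (Suc m)))[p := es ! p])) = U"
        using U'm Um pp by (auto simp: U'_def fun_upd_idem)
      moreover have "snd (U' (Suc m)) ! p = x" using U'm pp by simp
      ultimately show "row_ins (U'(Suc m := (fst (U' (Suc m)), (snd (U' (Suc m)))[p := es ! p])))
         (Suc (Suc m)) (snd (U' (Suc m)) ! p) T" using 2(3) by simp
    qed
    have agree: "\<forall>i. 1 \<le> i \<and> i \<le> m \<longrightarrow> U' i = T i" using 2(4) by (auto simp: U'_def)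
    define q' where "q' = bb + p + 1"
    have c1: "1 \<le> m \<longrightarrow> q' \<le> alpha U' m"
    proof
      assume m1: "1 \<le> m"
      have "U' m = T m" using agree m1 by simp
      moreover have "fst (T (Suc m)) + length (snd (T (Suc m))) \<le> fst (T m) + length (snd (T m))"
        using ssytD(3)[OF T m1] .
      ultimately show "q' \<le> alpha U' m" using Tm pp by (simp add: alpha_def q'_def)
    qed
    have c2: "1 \<le> m \<longrightarrow> (q', m) \<in> cells U' \<longrightarrow> entry U' (q', m) < es ! p"
    proof (intro impI)
      assume m1: "1 \<le> m" and cin: "(q', m) \<in> cells U'"
      have e: "U' m = T m" using agree m1 by simp
      have "(q', m) \<in> cells T" using cells_row[of U' m T, OF e] cin by simp
      moreover have "(q', Suc m) \<in> cells T" using Tm pp by (simp add: mem_cells q'_def)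
      ultimately have "entry T (q', m) < entry T (q', Suc m)" by (rule ssytD(5)[OF T])
      moreover have "entry T (q', Suc m) = es ! p" using Tm by (simp add: entry_def beta_def q'_def)
      ultimately show "entry U' (q', m) < es ! p" using entry_row[of U' m T, OF e] by simp
    qed
    show ?thesis by (rule IH[OF rec ri agree _ c1 c2]) (simp add: q'_def)
  qed
qed

lemma insert_tab_det: "insert_tab S r k T1 \<Longrightarrow> insert_tab S r k T2 \<Longrightarrow> T1 = T2"
  unfolding insert_tab_def by (cases "r = 0") (auto intro: row_ins_det)

lemma partA:
  assumes T: "skew_ssyt T" and ins: "insert_tab T r k S"
  shows "\<exists>c. cells S - cells T = {c} \<and> outside_corner S c \<and> fst (rev_ins S c) = T"
proof (cases "r = 0")
  case True
  hence ri: "row_ins T 1 k S" using ins by (simp add: insert_tab_def)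
  have h2: "\<forall>i\<ge>1. sorted (snd (T i))" using ssytD(4)[OF T] by simp
  have h3: "\<forall>i\<ge>1. alpha T (Suc i) \<le> alpha T i" using ssytD(3)[OF T] by (simp add: alpha_def)
  from rowins_rev[OF ri _ h2 h3] obtain c where
    "cells S - cells T = {c}" "outside_corner S c" "rev_ins S c = rev_into T 0 k" by auto
  thus ?thesis by auto
next
  case False
  then obtain i where ic: "inside_corner T (i, r)" and ent: "entry T (i, r) = k"
    and ri: "row_ins (T(r := (Suc (fst (T r)), tl (snd (T r))))) (Suc r) k S"
    using ins by (auto simp: insert_tab_def)
  obtain b l where Tr: "T r = (b, l)" by fastforce
  define T' where "T' = T(r := (Suc b, tl l))"
  have ri': "row_ins T' (Suc r) k S" using ri Tr by (simp add: T'_def)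
  have cin: "(i, r) \<in> cells T" and cout: "(i - 1, r) \<notin> cells T" using ic by (auto simp: inside_corner_def)
  have ib: "i = Suc b" "l \<noteq> []" using cin cout Tr by (auto simp: mem_cells)
  have srt: "sorted l" using ssytD(4)[OF T, of r] Tr by simp
  have k: "k = hd l" using ent ib Tr by (simp add: entry_def beta_def hd_conv_nth)
  have h2: "\<forall>i\<ge>Suc r. sorted (snd (T' i))" using ssytD(4)[OF T] by (simp add: T'_def)
  have h3: "\<forall>i\<ge>Suc r. alpha T' (Suc i) \<le> alpha T' i" using ssytD(3)[OF T] False
    by (simp add: alpha_def T'_def)
  from rowins_rev[OF ri' _ h2 h3] obtain c where c:
    "cells S - cells T' = {c}" "outside_corner S c" "Suc r \<le> snd c" "rev_ins S c = rev_into T' r k" by auto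
  have sub: "cells T' \<subseteq> cells T" using Tr by (auto simp: T'_def cells_def beta_def alpha_def split: if_splits)
  have cnT: "c \<notin> cells T"
  proof
    assume "c \<in> cells T"
    moreover have "T' (snd c) = T (snd c)" using c(3) by (simp add: T'_def)
    ultimately have "c \<in> cells T'" using cells_row[of T' "snd c" T "fst c"] by simp
    thus False using c(1) by auto
  qed
  have cs: "cells S - cells T = {c}" using c(1) sub cnT by auto
  obtain r0 where r0: "r = Suc r0" using False by (cases r) auto
  have all: "\<forall>y\<in>set (tl l). k \<le> y" using srt ib(2) k by (cases l) auto
  have "rev_into T' r k = (T'(r := (b, k # tl l)), r, k)"
    using all r0 by (simp add: T'_def)
  moreover have "T'(r := (b, k # tl l)) = T" using k ib(2) Tr by (auto simp: T'_def fun_upd_idem)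
  ultimately show ?thesis using cs c by auto
qed

lemma partB:
  assumes T: "skew_ssyt T" and oc: "outside_corner T c" and rv: "rev_ins T c = (S, r, k)"
  shows "insert_tab S r k T"
proof -
  obtain i j where c: "c = (i, j)" by fastforce
  obtain b l where Tj: "T j = (b, l)" by fastforce
  have cin: "(i, j) \<in> cells T" and cout: "(Suc i, j) \<notin> cells T" using oc c by (auto simp: outside_corner_def)
  have ij: "1 \<le> j" "i = b + length l" "l \<noteq> []" "b < i" using cin cout Tj by (auto simp: mem_cells)
  have srt: "sorted l" using ssytD(4)[OF T, of j] Tj by simp
  define T0 where "T0 = T(j := (b, butlast l))"
  have ent: "entry T c = last l" using c ij Tj by (simp add: entry_def beta_def last_conv_nth)
  have rv': "rev_into T0 (j - 1) (last l) = (S, r, k)" using rv c Tj ent by (simp add: rev_ins_def T0_def)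
  have "\<forall>y\<in>set (snd (T0 j)). y \<le> last l"
  proof
    fix y assume "y \<in> set (snd (T0 j))"
    hence "y \<in> set (butlast l)" by (simp add: T0_def)
    moreover have "sorted (butlast l @ [last l])" using srt ij(3) by simp
    ultimately show "y \<le> last l" by (simp add: sorted_append)
  qed
  hence "row_ins T0 j (last l) (T0(j := (fst (T0 j), snd (T0 j) @ [last l])))" by (rule row_ins.place)
  moreover have "T0(j := (fst (T0 j), snd (T0 j) @ [last l])) = T" using Tj ij(3)
    by (auto simp: T0_def fun_upd_idem)
  ultimately have ri: "row_ins T0 (Suc (j - 1)) (last l) T" using ij(1) by simp
  have agree: "\<forall>i'. 1 \<le> i' \<and> i' \<le> j - 1 \<longrightarrow> T0 i' = T i'" using ij(1) by (auto simp: T0_def)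
  have c1: "1 \<le> j - 1 \<longrightarrow> i \<le> alpha T0 (j - 1)"
  proof
    assume j1: "1 \<le> j - 1"
    have "fst (T (Suc (j - 1))) + length (snd (T (Suc (j - 1)))) \<le> fst (T (j - 1)) + length (snd (T (j - 1)))"
      using ssytD(3)[OF T j1] .
    moreover have "Suc (j - 1) = j" using ij(1) by simp
    moreover have "T0 (j - 1) = T (j - 1)" using j1 ij(1) by (auto simp add: T0_def)
    ultimately show "i \<le> alpha T0 (j - 1)" using Tj ij by (simp add: alpha_def)
  qed
  have c2: "1 \<le> j - 1 \<longrightarrow> (i, j - 1) \<in> cells T0 \<longrightarrow> entry T0 (i, j - 1) < last l"
  proof (intro impI)
    assume j1: "1 \<le> j - 1" and ci: "(i, j - 1) \<in> cells T0"
    have e: "T0 (j - 1) = T (j - 1)" using j1 ij(1) by (auto simp add: T0_def)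
    have "(i, j - 1) \<in> cells T" using cells_row[of T0 "j - 1" T, OF e] ci by simp
    moreover have "(i, Suc (j - 1)) \<in> cells T" using cin ij(1) by simp
    ultimately have "entry T (i, j - 1) < entry T (i, Suc (j - 1))" by (rule ssytD(5)[OF T])
    moreover have "entry T (i, Suc (j - 1)) = last l" using ent c ij(1) by simp
    ultimately show "entry T0 (i, j - 1) < last l" using entry_row[of T0 "j - 1" T, OF e] by simp
  qed
  show ?thesis by (rule rev_into_ins[OF T rv' ri agree _ c1 c2]) (use ij(4) in simp)
qed

theorem lemma4p7:
  shows "(\<forall>T r k S. skew_ssyt T \<and> 0 < k \<and> insert_tab T r k S \<longrightarrow>
            (\<exists>c. cells S - cells T = {c} \<and> outside_corner S c \<and>
                 fst (rev_ins S c) = T))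
       \<and> (\<forall>T c S r k. skew_ssyt T \<and> outside_corner T c \<and> rev_ins T c = (S, r, k) \<longrightarrow>
            insert_tab S r k T \<and> (\<forall>T'. insert_tab S r k T' \<longrightarrow> T' = T))"
  using partA partB insert_tab_det by blast

end
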